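(* Let $\hat{H}=\sum_{j}h_j\hat{\gamma}_j$ be a Hamiltonian on a finite-dimensional Hilbert space, written as a finite sum where each $\hat{\gamma}_j$ is Hermitian with operator norm $\|\hat{\gamma}_j\|=1$ and each $h_j\in\mathbb{R}$. Let $G$ be its commutativity graph. Fix an arbitrary operator $\hat{B}$ and let $(\bar{\gamma}^B_i(t))_i$ be the solution of the linear system $$\dot{\bar{\gamma}}^B_{i}(t)=2\sum_{j:\langle ij\rangle\in G}|h_j|\,\bar{\gamma}^B_j(t),\qquad \bar{\gamma}^B_{i}(0)=\|[\hat{\gamma}_{i},\hat{B}]\|.$$ Then for every $t\ge 0$ and every vertex $i$, $$\|[\hat{\gamma}_i(t),\hat{B}]\|\le \bar{\gamma}^B_i(t).$$ Moreover, for every operator $\hat{A}$ and every $t\ge0$, $$\|[\hat{A}(t),\hat{B}]\|-\|[\hat{A},\hat{B}]\|\le \int_0^t\sum_{i\in S(\hat{A})}2\|\hat{A}\|\,|h_i|\,\bar{\gamma}^B_i(t')\,dt'.$$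
   Context: $\|\cdot\|$ denotes the operator norm and $\hat{X}(t)=e^{i\hat{H}t}\hat{X}e^{-i\hat{H}t}$ for any operator $\hat{X}$. The commutativity graph $G$ of the decomposition $\hat{H}=\sum_j h_j\hat{\gamma}_j$ has one vertex $j$ for each term $\hat{\gamma}_j$, and vertices $i\ne j$ are joined by an edge $\langle ij\rangle$ if and only if $[\hat{\gamma}_i,\hat{\gamma}_j]\neq 0$. For an operator $\hat{A}$, its support on the commutativity graph is $S(\hat{A})=\{i:[\hat{\gamma}_i,\hat{A}]\neq0\}$. *)

theory Defs
  imports "HOL-Analysis.Analysis"
begin

text \<open>Operators on the finite-dimensional Hilbert space complex^'n are complex
  matrices of type complex^'n^'n acting by matrix-vector multiplication.\<close>

definition opnorm :: "complex^'n^'n \<Rightarrow> real" where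
  "opnorm A = onorm (\<lambda>x. A *v x)"

definition adjoint :: "complex^'n^'n \<Rightarrow> complex^'n^'n" where
  "adjoint A = (\<chi> a b. cnj (A $ b $ a))"

definition comm :: "complex^'n^'n \<Rightarrow> complex^'n^'n \<Rightarrow> complex^'n^'n" where
  "comm A B = A ** B - B ** A"

definition cscale :: "complex \<Rightarrow> complex^'n^'n \<Rightarrow> complex^'n^'n" where
  "cscale c A = (\<chi> a b. c * A $ a $ b)"

fun mpow :: "complex^'n^'n \<Rightarrow> nat \<Rightarrow> complex^'n^'n" where
  "mpow A 0 = mat 1"
| "mpow A (Suc k) = A ** mpow A k"

definition mexp :: "complex^'n^'n \<Rightarrow> complex^'n^'n" where
  "mexp A = (\<Sum>k. (1 / fact k) *\<^sub>R mpow A k)"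

definition evol :: "complex^'n^'n \<Rightarrow> real \<Rightarrow> complex^'n^'n \<Rightarrow> complex^'n^'n" where
  "evol H t X = mexp (cscale (\<i> * complex_of_real t) H) ** X ** mexp (cscale (- \<i> * complex_of_real t) H)"

definition cedge :: "('j \<Rightarrow> complex^'n^'n) \<Rightarrow> 'j \<Rightarrow> 'j \<Rightarrow> bool" where
  "cedge \<gamma> i j \<longleftrightarrow> i \<noteq> j \<and> comm (\<gamma> i) (\<gamma> j) \<noteq> 0"

definition supp_cg :: "('j \<Rightarrow> complex^'n^'n) \<Rightarrow> complex^'n^'n \<Rightarrow> 'j set" where
  "supp_cg \<gamma> A = {i. comm (\<gamma> i) A \<noteq> 0}"

end

theory Submission
  imports Defs
begin

lemma linear_mv: "linear (\<lambda>x. (A::complex^'n^'n) *v x)"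
  by (rule linearI) (simp_all add: matrix_vector_right_distrib, simp add: matrix_vector_mult_def vec_eq_iff scaleR_sum_right)

lemma bl_mv: "bounded_linear (\<lambda>x. (A::complex^'n^'n) *v x)"
  using linear_mv linear_conv_bounded_linear by blast

lemma opnorm_bound: "norm (A *v x) \<le> opnorm A * norm x"
  unfolding opnorm_def by (rule onorm[OF bl_mv])

lemma opnorm_le: "(\<And>x. norm (A *v x) \<le> b * norm x) \<Longrightarrow> opnorm A \<le> b"
  unfolding opnorm_def by (rule onorm_le)

lemma opnorm_nonneg: "0 \<le> opnorm A"
  unfolding opnorm_def by (rule onorm_pos_le[OF bl_mv])

lemma norm_vec_le_sum: "norm (x::'a::real_normed_vector^'n) \<le> (\<Sum>i\<in>UNIV. norm (x$i))"
  by (simp add: norm_vec_def L2_set_le_sum)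

lemma entry_le_opnorm: "norm ((A::complex^'n^'n) $ a $ b) \<le> opnorm A"
proof -
  have e: "norm (axis b (1::complex)) = 1"
    proof -
    have "(\<Sum>i\<in>UNIV. (norm (axis b (1::complex) $ i))\<^sup>2) = (\<Sum>i\<in>UNIV. if i = b then 1 else 0)"
      by (rule sum.cong) (auto simp: axis_def)
    then show ?thesis unfolding norm_vec_def L2_set_def by simp
  qed
  have "(A *v axis b 1) $ a = A $ a $ b"
    by (simp add: matrix_vector_mult_def axis_def if_distrib cong: if_cong)
  then have "norm (A $ a $ b) \<le> norm (A *v axis b 1)"
    using Finite_Cartesian_Product.norm_nth_le[of "A *v axis b 1" a] by simp
  also have "\<dots> \<le> opnorm A" using opnorm_bound[of A "axis b 1"] e by simp
  finally show ?thesis .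
qed

lemma opnorm_le_sum: "opnorm (A::complex^'n^'n) \<le> (\<Sum>a\<in>UNIV. \<Sum>b\<in>UNIV. norm (A$a$b))"
proof (rule opnorm_le)
  fix x :: "complex^'n"
  have "norm (A *v x) \<le> (\<Sum>a\<in>UNIV. norm ((A *v x)$a))" by (rule norm_vec_le_sum)
  also have "\<dots> \<le> (\<Sum>a\<in>UNIV. \<Sum>b\<in>UNIV. norm (A$a$b) * norm x)"
  proof (rule sum_mono)
    fix a
    have "norm ((A *v x)$a) = norm (\<Sum>b\<in>UNIV. A$a$b * x$b)" by (simp add: matrix_vector_mult_def)
    also have "\<dots> \<le> (\<Sum>b\<in>UNIV. norm (A$a$b * x$b))" by (rule norm_sum)
    also have "\<dots> \<le> (\<Sum>b\<in>UNIV. norm (A$a$b) * norm x)"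
      by (rule sum_mono) (simp add: norm_mult mult_left_mono Finite_Cartesian_Product.norm_nth_le)
    finally show "norm ((A *v x)$a) \<le> (\<Sum>b\<in>UNIV. norm (A$a$b) * norm x)" .
  qed
  also have "\<dots> = (\<Sum>a\<in>UNIV. \<Sum>b\<in>UNIV. norm (A$a$b)) * norm x"
    by (simp add: sum_distrib_right)
  finally show "norm (A *v x) \<le> (\<Sum>a\<in>UNIV. \<Sum>b\<in>UNIV. norm (A$a$b)) * norm x" .
qed

lemma opnorm_add: "opnorm (A + B) \<le> opnorm A + opnorm (B::complex^'n^'n)"
  unfolding opnorm_def using onorm_triangle[OF bl_mv bl_mv, of A B]
  by (simp add: matrix_vector_mult_add_rdistrib[abs_def])

lemma opnorm_scaleR: "opnorm (r *\<^sub>R (A::complex^'n^'n)) = \<bar>r\<bar> * opnorm A"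
proof -
  have "(\<lambda>x. (r *\<^sub>R A) *v x) = (\<lambda>x. r *\<^sub>R (A *v x))"
    by (auto simp: matrix_vector_mult_def vec_eq_iff scaleR_sum_right)
  then show ?thesis unfolding opnorm_def using onorm_scaleR[OF bl_mv] by simp
qed

lemma opnorm_mult: "opnorm (A ** B) \<le> opnorm A * opnorm (B::complex^'n^'n)"
proof -
  have "(\<lambda>x. (A ** B) *v x) = (\<lambda>x. A *v x) \<circ> (\<lambda>x. B *v x)"
    by (auto simp: matrix_vector_mul_assoc)
  then show ?thesis unfolding opnorm_def using onorm_compose[OF bl_mv bl_mv] by simp
qed

lemma opnorm_one: "opnorm (mat 1 :: complex^'n^'n) = 1"
proof -
  have "(\<lambda>x. (mat 1 :: complex^'n^'n) *v x) = (\<lambda>x. x)" by simp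
  then show ?thesis unfolding opnorm_def by (metis onorm_id)
qed

lemma opnorm_eq_0: "opnorm (A::complex^'n^'n) = 0 \<longleftrightarrow> A = 0"
proof
  assume "opnorm A = 0"
  then have "norm (A $ a $ b) = 0" for a b using entry_le_opnorm[of A a b] by simp
  then show "A = 0" by (simp add: vec_eq_iff)
next
  assume "A = 0"
  have "(\<lambda>x. (0 :: complex^'n^'n) *v x) = (\<lambda>x. 0)" by simp
  with \<open>A = 0\<close> show "opnorm A = 0" unfolding opnorm_def by (metis onorm_zero)
qed

typedef ('n::finite) cm = "UNIV :: (complex^'n^'n) set" morphisms mat_of cm_of by auto

setup_lifting type_definition_cm

instantiation cm :: (finite) ring_1
begin
lift_definition zero_cm :: "'a cm" is "0" .
lift_definition one_cm :: "'a cm" is "mat 1" .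
lift_definition plus_cm :: "'a cm \<Rightarrow> 'a cm \<Rightarrow> 'a cm" is "(+)" .
lift_definition minus_cm :: "'a cm \<Rightarrow> 'a cm \<Rightarrow> 'a cm" is "(-)" .
lift_definition uminus_cm :: "'a cm \<Rightarrow> 'a cm" is "uminus" .
lift_definition times_cm :: "'a cm \<Rightarrow> 'a cm \<Rightarrow> 'a cm" is "(**)" .
instance
proof
  fix a b c :: "'a cm"
  show "a * b * c = a * (b * c)" by transfer (rule matrix_mul_assoc[symmetric])
  show "1 * a = a" by transfer (rule matrix_mul_lid)
  show "a * 1 = a" by transfer (rule matrix_mul_rid)
  show "(a + b) * c = a * c + b * c" by transfer (simp add: matrix_matrix_mult_def vec_eq_iff sum.distrib distrib_right)
  show "a * (b + c) = a * b + a * c" by transfer (rule matrix_add_ldistrib)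
  show "a + b + c = a + (b + c)" by transfer (rule add.assoc)
  show "a + b = b + a" by transfer (rule add.commute)
  show "0 + a = a" by transfer (rule add_0_left)
  show "- a + a = 0" by transfer (rule left_minus)
  show "a - b = a + - b" by transfer (rule diff_conv_add_uminus)
  show "(0::'a cm) \<noteq> 1"
  proof transfer
    obtain i :: 'a where True by simp
    have "(mat 1 :: complex^'a^'a) $ i $ i = 1" by (simp add: mat_def)
    then show "(0::complex^'a^'a) \<noteq> mat 1" by (metis zero_index zero_neq_one)
  qed
qed
end

instantiation cm :: (finite) real_algebra_1
begin
lift_definition scaleR_cm :: "real \<Rightarrow> 'a cm \<Rightarrow> 'a cm" is "scaleR" .
instance
proof
  fix a b :: real and x y :: "'a cm"
  show "a *\<^sub>R (x + y) = a *\<^sub>R x + a *\<^sub>R y" by transfer (rule scaleR_add_right)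
  show "(a + b) *\<^sub>R x = a *\<^sub>R x + b *\<^sub>R x" by transfer (rule scaleR_add_left)
  show "a *\<^sub>R b *\<^sub>R x = (a * b) *\<^sub>R x" by transfer (rule scaleR_scaleR)
  show "1 *\<^sub>R x = x" by transfer (rule scaleR_one)
  show "a *\<^sub>R x * y = a *\<^sub>R (x * y)" by transfer (rule scalar_matrix_assoc[symmetric])
  show "x * a *\<^sub>R y = a *\<^sub>R (x * y)" by transfer (simp add: matrix_scalar_ac scalar_matrix_assoc)
qed
end

instantiation cm :: (finite) real_normed_algebra_1
begin
lift_definition norm_cm :: "'a cm \<Rightarrow> real" is "opnorm" .
definition sgn_cm :: "'a cm \<Rightarrow> 'a cm" where "sgn_cm x = x /\<^sub>R norm x"
definition dist_cm :: "'a cm \<Rightarrow> 'a cm \<Rightarrow> real" where "dist_cm x y = norm (x - y)"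
definition uniformity_cm :: "('a cm \<times> 'a cm) filter" where
  "uniformity_cm = (INF e\<in>{0 <..}. principal {(x, y). dist x y < e})"
definition open_cm :: "'a cm set \<Rightarrow> bool" where
  "open_cm U = (\<forall>x\<in>U. \<forall>\<^sub>F (x', y) in uniformity. x' = x \<longrightarrow> y \<in> U)"
instance
proof
  fix a b :: real and x y :: "'a cm"
  show "(norm x = 0) = (x = 0)" by transfer (rule opnorm_eq_0)
  show "norm (x + y) \<le> norm x + norm y" by transfer (rule opnorm_add)
  show "norm (a *\<^sub>R x) = \<bar>a\<bar> * norm x" by transfer (rule opnorm_scaleR)
  show "norm (x * y) \<le> norm x * norm y" by transfer (rule opnorm_mult)
  show "norm (1::'a cm) = 1" by transfer (rule opnorm_one)
  show "dist x y = norm (x - y)" by (simp add: dist_cm_def)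
  show "sgn x = x /\<^sub>R norm x" by (simp add: sgn_cm_def)
qed (simp_all add: uniformity_cm_def open_cm_def)
end

lemma norm_mat_of_le: "norm (mat_of (x::'n::finite cm)) \<le> real (CARD('n) * CARD('n)) * norm x"
proof -
  have "norm (mat_of x) \<le> (\<Sum>a\<in>UNIV. norm (mat_of x $ a))" by (rule norm_vec_le_sum)
  also have "\<dots> \<le> (\<Sum>a\<in>UNIV. \<Sum>b\<in>UNIV. norm (mat_of x $ a $ b))"
    by (rule sum_mono) (rule norm_vec_le_sum)
  also have "\<dots> \<le> (\<Sum>a\<in>(UNIV::'n set). \<Sum>b\<in>(UNIV::'n set). norm x)"
    by (intro sum_mono) (simp add: entry_le_opnorm norm_cm.rep_eq)
  also have "\<dots> = real (CARD('n) * CARD('n)) * norm x" by simp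
  finally show ?thesis .
qed

lemma norm_le_mat_of: "norm (x::'n::finite cm) \<le> real (CARD('n) * CARD('n)) * norm (mat_of x)"
proof -
  have "norm x \<le> (\<Sum>a\<in>UNIV. \<Sum>b\<in>UNIV. norm (mat_of x $ a $ b))"
    unfolding norm_cm.rep_eq by (rule opnorm_le_sum)
  also have "\<dots> \<le> (\<Sum>a\<in>(UNIV::'n set). \<Sum>b\<in>(UNIV::'n set). norm (mat_of x))"
    by (intro sum_mono order_trans[OF Finite_Cartesian_Product.norm_nth_le Finite_Cartesian_Product.norm_nth_le])
  also have "\<dots> = real (CARD('n) * CARD('n)) * norm (mat_of x)" by simp
  finally show ?thesis .
qed

lemma mat_of_add: "mat_of (x + y) = mat_of x + mat_of y" by transfer simp
lemma mat_of_diff: "mat_of (x - y) = mat_of x - mat_of y" by transfer simp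
lemma mat_of_scaleR: "mat_of (r *\<^sub>R x) = r *\<^sub>R mat_of x" by transfer simp
lemma mat_of_mult: "mat_of (x * y) = mat_of x ** mat_of y" by transfer simp
lemma mat_of_one: "mat_of 1 = mat 1" by transfer simp
lemma mat_of_zero: "mat_of 0 = 0" by transfer simp

lemma bl_mat_of: "bounded_linear (mat_of :: 'n::finite cm \<Rightarrow> _)"
proof (rule bounded_linear_intro[where K="real (CARD('n) * CARD('n))"])
  fix x y :: "'n cm" and r :: real
  show "mat_of (x + y) = mat_of x + mat_of y" by (rule mat_of_add)
  show "mat_of (r *\<^sub>R x) = r *\<^sub>R mat_of x" by (rule mat_of_scaleR)
  show "norm (mat_of x) \<le> norm x * real (CARD('n) * CARD('n))"
    using norm_mat_of_le[of x] by (simp add: mult.commute)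
qed

lemma bl_cm_of: "bounded_linear (cm_of :: _ \<Rightarrow> 'n::finite cm)"
proof (rule bounded_linear_intro[where K="real (CARD('n) * CARD('n))"])
  fix x y :: "complex^'n^'n" and r :: real
  show "cm_of (x + y) = (cm_of x + cm_of y :: 'n cm)" by (simp add: plus_cm.abs_eq)
  show "cm_of (r *\<^sub>R x) = (r *\<^sub>R cm_of x :: 'n cm)" by (simp add: scaleR_cm.abs_eq)
  show "norm (cm_of x :: 'n cm) \<le> norm x * real (CARD('n) * CARD('n))"
    using norm_le_mat_of[of "cm_of x :: 'n cm"] by (simp add: cm_of_inverse mult.commute)
qed

instance cm :: (finite) banach
proof
  fix X :: "nat \<Rightarrow> 'a cm"
  assume "Cauchy X"
  then have "Cauchy (\<lambda>n. mat_of (X n))"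
    by (rule bounded_linear.Cauchy[OF bl_mat_of])
  then obtain L where "(\<lambda>n. mat_of (X n)) \<longlonglongrightarrow> L"
    using convergent_eq_Cauchy by blast
  then have "(\<lambda>n. cm_of (mat_of (X n))) \<longlonglongrightarrow> cm_of L"
    by (rule bounded_linear.tendsto[OF bl_cm_of])
  then show "convergent X" by (auto simp: mat_of_inverse convergent_def)
qed

definition Ev :: "'a::{real_normed_algebra_1,banach} \<Rightarrow> real \<Rightarrow> 'a \<Rightarrow> 'a" where
  "Ev K t Y = exp (t *\<^sub>R K) * Y * exp ((-t) *\<^sub>R K)"

lemma exp_inv1: "exp (t *\<^sub>R K) * exp ((-t) *\<^sub>R K) = 1"
  by (simp add: exp_minus_inverse)

lemma exp_inv2: "exp ((-t) *\<^sub>R K) * exp (t *\<^sub>R K) = 1"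
  using exp_minus_inverse[of "-(t *\<^sub>R K)"] by simp

lemma Ev_mult: "Ev K t (X * Y) = Ev K t X * Ev K t Y"
proof -
  have "Ev K t X * Ev K t Y = exp (t *\<^sub>R K) * X * (exp ((-t) *\<^sub>R K) * exp (t *\<^sub>R K)) * Y * exp ((-t) *\<^sub>R K)"
    unfolding Ev_def by (simp only: mult.assoc)
  also have "\<dots> = Ev K t (X * Y)" unfolding exp_inv2 Ev_def by (simp only: mult.assoc mult_1_left)
  finally show ?thesis by simp
qed

lemma Ev_add: "Ev K t (X + Y) = Ev K t X + Ev K t Y"
  by (simp add: Ev_def algebra_simps)
lemma Ev_diff: "Ev K t (X - Y) = Ev K t X - Ev K t Y"
  by (simp add: Ev_def algebra_simps)
lemma Ev_scaleR: "Ev K t (r *\<^sub>R X) = r *\<^sub>R Ev K t X"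
  by (simp add: Ev_def)
lemma Ev_zero: "Ev K t 0 = 0"
  by (simp add: Ev_def)
lemma Ev_sum: "Ev K t (\<Sum>j\<in>S. f j) = (\<Sum>j\<in>S. Ev K t (f j))"
  by (induction S rule: infinite_finite_induct) (simp_all add: Ev_add Ev_zero)
lemma Ev_0: "Ev K 0 Y = Y"
  by (simp add: Ev_def)

lemma Ev_deriv:
  "((\<lambda>t. Ev K t Y) has_vector_derivative Ev K t (K * Y - Y * K)) (at t within S)"
proof -
  have 1: "((\<lambda>t. exp (t *\<^sub>R K)) has_vector_derivative exp (t *\<^sub>R K) * K) (at t within S)"
    by (rule exp_scaleR_has_vector_derivative_right)
  have 2: "((\<lambda>t. exp (t *\<^sub>R (-K))) has_vector_derivative exp (t *\<^sub>R (-K)) * (-K)) (at t within S)"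
    by (rule exp_scaleR_has_vector_derivative_right)
  have e: "(\<lambda>t. exp ((-t) *\<^sub>R K)) = (\<lambda>t. exp (t *\<^sub>R (-K)))" by simp
  have "((\<lambda>t. exp (t *\<^sub>R K) * Y * exp (t *\<^sub>R (-K))) has_vector_derivative
      (exp (t *\<^sub>R K) * Y * (exp (t *\<^sub>R (-K)) * (-K)) + (exp (t *\<^sub>R K) * 0 + exp (t *\<^sub>R K) * K * Y) * exp (t *\<^sub>R (-K)))) (at t within S)"
    by (intro has_vector_derivative_mult 1 2 has_vector_derivative_const)
  moreover have "exp (t *\<^sub>R (-K)) * (-K) = (-K) * exp (t *\<^sub>R (-K))"
    by (rule exp_times_scaleR_commute)
  ultimately have "((\<lambda>t. exp (t *\<^sub>R K) * Y * exp (t *\<^sub>R (-K))) has_vector_derivative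
      (exp (t *\<^sub>R K) * (K * Y - Y * K) * exp (t *\<^sub>R (-K)))) (at t within S)"
    by (simp add: algebra_simps)
  then show ?thesis unfolding Ev_def by simp
qed

lemma cm_of_mpow: "cm_of (mpow A k) = (cm_of A :: 'n::finite cm) ^ k"
proof (induction k)
  case 0 then show ?case by (simp add: one_cm.abs_eq)
next
  case (Suc k) then show ?case by (metis times_cm.abs_eq power_Suc mpow.simps(2))
qed

lemma mexp_exp: "mexp A = mat_of (exp (cm_of A :: 'n::finite cm))"
proof -
  have "mat_of (exp (cm_of A :: 'n cm)) = mat_of (\<Sum>k. (cm_of A :: 'n cm) ^ k /\<^sub>R fact k)"
    by (simp add: exp_def)
  also have "\<dots> = (\<Sum>k. mat_of ((cm_of A :: 'n cm) ^ k /\<^sub>R fact k))"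
    by (rule bounded_linear.suminf[OF bl_mat_of summable_exp_generic])
  also have "\<dots> = (\<Sum>k. (1 / fact k) *\<^sub>R mpow A k)"
    by (simp add: mat_of_scaleR cm_of_mpow[symmetric] cm_of_inverse divide_inverse_commute)
  finally show ?thesis by (simp add: mexp_def)
qed

definition Km :: "complex^'n^'n \<Rightarrow> 'n::finite cm" where
  "Km H = cm_of (cscale \<i> H)"

lemma evol_Ev:
  fixes H X :: "complex^'n::finite^'n"
  shows "evol H t X = mat_of (Ev (Km H) t (cm_of X))"
proof -
  have 1: "cscale (\<i> * complex_of_real t) H = t *\<^sub>R cscale \<i> H"
    by (simp add: cscale_def vec_eq_iff scaleR_conv_of_real[where 'a=complex])
  have 2: "cscale (- \<i> * complex_of_real t) H = (-t) *\<^sub>R cscale \<i> H"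
    by (simp add: cscale_def vec_eq_iff scaleR_conv_of_real[where 'a=complex])
  have s: "cm_of (r *\<^sub>R M) = r *\<^sub>R (cm_of M :: 'n cm)" for r M
    by (simp add: scaleR_cm.abs_eq)
  show ?thesis
    unfolding evol_def Ev_def Km_def 1 2 mexp_exp s
    by (simp add: mat_of_mult cm_of_inverse)
qed

lemma mv_add: "mat_of (X + Y) *v x = mat_of X *v x + mat_of Y *v x"
  by (simp add: mat_of_add matrix_vector_mult_add_rdistrib)
lemma mv_diff: "mat_of (X - Y) *v x = mat_of X *v x - mat_of Y *v x"
  by (simp add: mat_of_diff matrix_vector_mult_diff_rdistrib)
lemma mv_scaleR: "mat_of (r *\<^sub>R X) *v x = r *\<^sub>R (mat_of X *v x)"
  by (simp add: mat_of_scaleR matrix_vector_mult_def vec_eq_iff scaleR_sum_right)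
lemma mv_mult: "mat_of (X * Y) *v x = mat_of X *v (mat_of Y *v x)"
  by (simp add: mat_of_mult matrix_vector_mul_assoc)
lemma mv_one: "mat_of 1 *v x = x"
  by (simp add: mat_of_one)
lemma mv_zero: "mat_of 0 *v x = 0"
  by (simp add: mat_of_zero)
lemma mv_bound: "norm (mat_of X *v x) \<le> norm X * norm x"
  by (simp add: norm_cm.rep_eq opnorm_bound)

lemma cm_of_sum: "cm_of (\<Sum>j\<in>S. f j) = (\<Sum>j\<in>S. (cm_of (f j) :: 'n::finite cm))"
  by (induction S rule: infinite_finite_induct) (simp_all add: zero_cm.abs_eq, metis plus_cm.abs_eq)
lemma cm_of_scaleR: "cm_of (r *\<^sub>R M) = r *\<^sub>R (cm_of M :: 'n::finite cm)"
  by (simp add: scaleR_cm.abs_eq)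
lemma cm_of_diff: "cm_of (M - N) = (cm_of M - cm_of N :: 'n::finite cm)"
  by (simp add: minus_cm.abs_eq)
lemma cm_of_mult: "cm_of (M ** N) = (cm_of M * cm_of N :: 'n::finite cm)"
  by (simp add: times_cm.abs_eq)

definition skew :: "'n::finite cm \<Rightarrow> bool" where
  "skew Y \<longleftrightarrow> (\<forall>x. inner (mat_of Y *v x) x = 0)"
definition isom :: "'n::finite cm \<Rightarrow> bool" where
  "isom U \<longleftrightarrow> (\<forall>x. norm (mat_of U *v x) = norm x)"

lemma skew_add: "skew X \<Longrightarrow> skew Y \<Longrightarrow> skew (X + Y)"
  by (simp add: skew_def mv_add inner_add_left)
lemma skew_scaleR: "skew X \<Longrightarrow> skew (r *\<^sub>R X)"
  by (simp add: skew_def mv_scaleR)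
lemma skew_zero: "skew 0"
  by (simp add: skew_def mv_zero)
lemma skew_sum: "(\<And>j. j \<in> S \<Longrightarrow> skew (f j)) \<Longrightarrow> skew (\<Sum>j\<in>S. f j)"
  by (induction S rule: infinite_finite_induct) (simp_all add: skew_zero skew_add)

lemma inner_complex_cnj: "inner (z::complex) w = Re (cnj z * w)"
  by (simp add: inner_complex_def)

lemma hermitian_skew:
  fixes A :: "complex^'n::finite^'n"
  assumes "Defs.adjoint A = A"
  shows "skew (cm_of (cscale \<i> A))"
  unfolding skew_def
proof
  fix x :: "complex^'n"
  have h: "cnj (A $ a $ b) = A $ b $ a" for a b
  proof -
    have "Defs.adjoint A $ b $ a = A $ b $ a" using assms by simp
    then show ?thesis by (simp add: Defs.adjoint_def)
  qed
  define S where "S = (\<Sum>a\<in>UNIV. \<Sum>b\<in>UNIV. A $ b $ a * cnj (x $ b) * x $ a)"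
  have "cnj S = (\<Sum>a\<in>UNIV. \<Sum>b\<in>UNIV. cnj (A $ b $ a) * x $ b * cnj (x $ a))"
    by (simp add: S_def cnj_sum)
  also have "\<dots> = (\<Sum>a\<in>UNIV. \<Sum>b\<in>UNIV. A $ a $ b * x $ b * cnj (x $ a))"
    by (simp add: h)
  also have "\<dots> = (\<Sum>b\<in>UNIV. \<Sum>a\<in>UNIV. A $ a $ b * x $ b * cnj (x $ a))"
    by (rule sum.swap)
  also have "\<dots> = S"
    unfolding S_def by (simp add: mult_ac)
  finally have cS: "cnj S = S" .
  then have "Im S = 0" by (metis complex_cnj_cancel_iff complex_cnj_zero_iff diff_self Im_complex_div_lemma complex_eq_cancel_iff2 cnj.simps(2) neg_equal_zero)
  have "inner (mat_of (cm_of (cscale \<i> A)) *v x) x = (\<Sum>a\<in>UNIV. Re (cnj ((cscale \<i> A *v x) $ a) * x $ a))"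
    by (simp add: cm_of_inverse inner_vec_def inner_complex_cnj)
  also have "\<dots> = Re (\<Sum>a\<in>UNIV. cnj ((cscale \<i> A *v x) $ a) * x $ a)"
    by (simp add: Re_sum)
  also have "(\<Sum>a\<in>UNIV. cnj ((cscale \<i> A *v x) $ a) * x $ a) = - \<i> * S"
    by (simp add: S_def cscale_def matrix_vector_mult_def cnj_sum sum_distrib_left sum_distrib_right h mult_ac)
  finally show "inner (mat_of (cm_of (cscale \<i> A)) *v x) x = 0"
    using \<open>Im S = 0\<close> by simp
qed

lemma bl_mv_at: "bounded_linear (\<lambda>Y::'n::finite cm. mat_of Y *v x)"
proof (rule bounded_linear_intro[where K="norm x"])
  fix X Y :: "'n cm" and r :: real
  show "mat_of (X + Y) *v x = mat_of X *v x + mat_of Y *v x" by (rule mv_add)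
  show "mat_of (r *\<^sub>R X) *v x = r *\<^sub>R (mat_of X *v x)" by (rule mv_scaleR)
  show "norm (mat_of X *v x) \<le> norm X * norm x" by (rule mv_bound)
qed

lemma isom_exp:
  fixes K :: "'n::finite cm"
  assumes "skew K"
  shows "isom (exp (s *\<^sub>R K))"
  unfolding isom_def
proof
  fix x :: "complex^'n"
  define u where "u s = mat_of (exp (s *\<^sub>R K)) *v x" for s
  have du: "(u has_vector_derivative (mat_of K *v u s)) (at s)" for s
  proof -
    have "((\<lambda>s. mat_of (exp (s *\<^sub>R K)) *v x) has_vector_derivative (mat_of (K * exp (s *\<^sub>R K)) *v x)) (at s)"
      by (rule bounded_linear.has_vector_derivative[OF bl_mv_at exp_scaleR_has_vector_derivative_left])
    then show ?thesis by (simp add: u_def[abs_def] mv_mult)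
  qed
  have df: "((\<lambda>s. inner (u s) (u s)) has_field_derivative 0) (at s within UNIV)" for s
  proof -
    have "((\<lambda>s. inner (u s) (u s)) has_vector_derivative (inner (u s) (mat_of K *v u s) + inner (mat_of K *v u s) (u s))) (at s)"
      by (rule bounded_bilinear.has_vector_derivative[OF bounded_bilinear_inner du du])
    moreover have "inner (u s) (mat_of K *v u s) + inner (mat_of K *v u s) (u s) = 0"
      using assms by (simp add: skew_def inner_commute)
    ultimately show ?thesis by (simp add: has_real_derivative_iff_has_vector_derivative)
  qed
  obtain c where "\<forall>y\<in>UNIV. inner (u y) (u y) = c"
    using has_field_derivative_zero_constant[OF convex_UNIV df] by blast
  then have "inner (u s) (u s) = inner (u 0) (u 0)" by simp
  moreover have "u 0 = x" by (simp add: u_def mv_one)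
  ultimately have "norm (u s) ^ 2 = norm x ^ 2" by (simp add: power2_norm_eq_inner)
  then show "norm (mat_of (exp (s *\<^sub>R K)) *v x) = norm x"
    unfolding u_def by (simp add: power2_eq_iff_nonneg)
qed

lemma isom_norm_le: "isom U \<Longrightarrow> norm U \<le> 1"
  unfolding norm_cm.rep_eq by (rule opnorm_le) (simp add: isom_def)

lemma inner_polar: "inner a b = (norm (a + b) ^ 2 - norm a ^ 2 - norm (b::'a::real_inner) ^ 2) / 2"
  by (simp add: power2_norm_eq_inner inner_add_left inner_add_right inner_commute)

lemma isom_inner: "isom U \<Longrightarrow> inner (mat_of U *v a) (mat_of U *v b) = inner a b"
  by (simp add: inner_polar[of "mat_of U *v a"] inner_polar[of a] isom_def
      matrix_vector_right_distrib[symmetric])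

lemma mult3_le: "0 \<le> a \<Longrightarrow> a \<le> 1 \<Longrightarrow> 0 \<le> b \<Longrightarrow> b \<le> 1 \<Longrightarrow> 0 \<le> (y::real) \<Longrightarrow> a * y * b \<le> y"
  using mult_left_le[of "a*b" y] mult_le_one[of a b] by (simp add: mult_ac)

lemma norm_Ev:
  fixes K :: "'n::finite cm"
  assumes "skew K"
  shows "norm (Ev K t Y) = norm Y"
proof -
  let ?U = "exp (t *\<^sub>R K)" and ?V = "exp ((-t) *\<^sub>R K)"
  have nU: "norm ?U \<le> 1" by (rule isom_norm_le[OF isom_exp[OF assms]])
  have nV: "norm ?V \<le> 1" by (rule isom_norm_le[OF isom_exp[OF assms]])
  have "norm (Ev K t Y) \<le> norm (?U * Y) * norm ?V"
    unfolding Ev_def by (rule norm_mult_ineq)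
  also have "\<dots> \<le> norm ?U * norm Y * norm ?V"
    by (intro mult_right_mono norm_mult_ineq norm_ge_zero)
  also have "\<dots> \<le> norm Y"
    using nU nV by (intro mult3_le) simp_all
  finally have 1: "norm (Ev K t Y) \<le> norm Y" .
  have inv: "?V * ?U = 1" by (rule exp_inv2)
  have "?V * Ev K t Y * ?U = (?V * ?U) * Y * (?V * ?U)" unfolding Ev_def by (simp only: mult.assoc)
  then have "Y = ?V * Ev K t Y * ?U" by (simp only: inv mult_1_left mult_1_right)
  then have "norm Y \<le> norm (?V * Ev K t Y) * norm ?U"
    by (metis norm_mult_ineq)
  also have "\<dots> \<le> norm ?V * norm (Ev K t Y) * norm ?U"
    by (intro mult_right_mono norm_mult_ineq norm_ge_zero)
  also have "\<dots> \<le> norm (Ev K t Y)"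
    using nU nV by (intro mult3_le) simp_all
  finally show ?thesis using 1 by simp
qed

lemma skew_Ev:
  fixes K :: "'n::finite cm"
  assumes "skew K" "skew Y"
  shows "skew (Ev K t Y)"
  unfolding skew_def
proof
  fix x :: "complex^'n"
  let ?U = "exp (t *\<^sub>R K)" and ?V = "exp ((-t) *\<^sub>R K)"
  define y where "y = mat_of ?V *v x"
  have x: "x = mat_of ?U *v y"
    unfolding y_def by (simp only: mv_mult[symmetric] exp_inv1 mv_one)
  have "mat_of (Ev K t Y) *v x = mat_of ?U *v (mat_of Y *v y)"
    unfolding Ev_def y_def by (simp only: mv_mult)
  then have "inner (mat_of (Ev K t Y) *v x) x = inner (mat_of ?U *v (mat_of Y *v y)) (mat_of ?U *v y)"
    using x by simp
  also have "\<dots> = inner (mat_of Y *v y) y"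
    by (rule isom_inner[OF isom_exp[OF assms(1)]])
  finally have "inner (mat_of (Ev K t Y) *v x) x = inner (mat_of Y *v y) y" .
  then show "inner (mat_of (Ev K t Y) *v x) x = 0"
    using assms(2) by (simp add: skew_def)
qed

definition I0 :: "'n::finite cm" where "I0 = cm_of (cscale \<i> (mat 1))"

lemma cscale_mat1_left: "cscale c (mat 1) ** M = cscale c (M::complex^'n::finite^'n)"
  by (simp add: cscale_def matrix_matrix_mult_def mat_def vec_eq_iff if_distrib if_distribR sum.delta cong: if_cong)
lemma cscale_mat1_right: "M ** cscale c (mat 1) = cscale c (M::complex^'n::finite^'n)"
  by (simp add: cscale_def matrix_matrix_mult_def mat_def vec_eq_iff if_distrib if_distribR sum.delta' mult.commute cong: if_cong)

lemma I0_central: "I0 * Y = Y * (I0::'n::finite cm)"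
proof -
  have "mat_of (I0 * Y) = mat_of (Y * I0)"
    by (simp add: I0_def mat_of_mult cm_of_inverse cscale_mat1_left cscale_mat1_right)
  then show ?thesis by (simp add: mat_of_inject)
qed

lemma cm_of_cscale: "cm_of (cscale \<i> M) = I0 * (cm_of M :: 'n::finite cm)"
  by (simp add: I0_def cm_of_mult[symmetric] cscale_mat1_left)

lemma norm_I0: "norm (I0 :: 'n::finite cm) \<le> 1"
  unfolding norm_cm.rep_eq
proof (rule opnorm_le)
  fix x :: "complex^'n"
  have "mat_of I0 *v x = (\<chi> a. \<i> * x $ a)"
    by (simp add: I0_def cm_of_inverse cscale_def matrix_vector_mult_def mat_def vec_eq_iff if_distrib if_distribR sum.delta cong: if_cong)
  then show "norm (mat_of (I0::'n cm) *v x) \<le> 1 * norm x"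
    by (simp add: norm_vec_def norm_mult)
qed

lemma norm_I0_mult: "norm ((I0 :: 'n::finite cm) * Y) \<le> norm Y"
  using norm_mult_ineq[of "I0::'n cm" Y] norm_I0[where 'n='n]
  by (meson mult_left_le_one_le norm_ge_zero order_trans mult_right_mono mult_1_left)

lemma Ev_I0: "Ev K t (I0 * Y) = I0 * Ev K t Y"
  unfolding Ev_def by (simp add: I0_central[of "exp (t *\<^sub>R K)"] flip: mult.assoc)

lemma norm_one_plus_skew:
  fixes A :: "'n::finite cm"
  assumes "skew A"
  shows "norm (1 + s *\<^sub>R A) \<le> 1 + s^2 * (norm A)^2"
  unfolding norm_cm.rep_eq[of "1 + s *\<^sub>R A"]
proof (rule opnorm_le)
  fix x :: "complex^'n"
  let ?a = "norm A"
  have v: "mat_of (1 + s *\<^sub>R A) *v x = x + s *\<^sub>R (mat_of A *v x)"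
    by (simp add: mv_add mv_one mv_scaleR)
  have ax: "norm (mat_of A *v x) \<le> ?a * norm x" by (rule mv_bound)
  have "(norm (x + s *\<^sub>R (mat_of A *v x)))^2 = (norm x)^2 + 2 * s * inner (mat_of A *v x) x + s^2 * (norm (mat_of A *v x))^2"
  proof -
    have g: "(norm (p + q))^2 = (norm p)^2 + 2 * inner q p + (norm q)^2" for p q :: "complex^'n"
      by (simp add: power2_norm_eq_inner inner_add_left inner_add_right inner_commute)
    show ?thesis by (simp add: g power_mult_distrib)
  qed
  also have "\<dots> = (norm x)^2 + s^2 * (norm (mat_of A *v x))^2"
    using assms by (simp add: skew_def)
  also have "\<dots> \<le> (norm x)^2 + s^2 * (?a * norm x)^2"
    using ax by (intro add_left_mono mult_left_mono power_mono) simp_all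
  also have "\<dots> \<le> ((1 + s^2 * ?a^2) * norm x)^2"
  proof -
    have "((1 + s^2 * ?a^2) * norm x)^2 = ((norm x)^2 + s^2 * (?a * norm x)^2) + ((s^2 * ?a^2 * norm x)^2 + s^2 * (?a * norm x)^2)"
      by (simp add: power2_eq_square algebra_simps)
    moreover have "0 \<le> (s^2 * ?a^2 * norm x)^2 + s^2 * (?a * norm x)^2" by simp
    ultimately show ?thesis by linarith
  qed
  finally have "(norm (mat_of (1 + s *\<^sub>R A) *v x))^2 \<le> ((1 + s^2 * ?a^2) * norm x)^2"
    by (simp add: v)
  then show "norm (mat_of (1 + s *\<^sub>R A) *v x) \<le> (1 + s^2 * ?a^2) * norm x"
    by (rule power2_le_imp_le) simp
qed

lemma norm3: "norm (p + q + r) \<le> norm p + norm q + norm (r::'a::real_normed_vector)"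
  by (meson add_right_mono norm_triangle_ineq order_trans)

lemma local_bound:
  fixes C :: "real \<Rightarrow> 'n::finite cm" and A R :: "'n cm"
  assumes D: "(C has_vector_derivative (A * C t - C t * A + R)) (at t within {0..})"
    and sk: "skew A" and t0: "0 \<le> t" and e: "0 < e"
  shows "\<exists>d>0. \<forall>\<epsilon>. 0 < \<epsilon> \<and> \<epsilon> < d \<longrightarrow> norm (C (t+\<epsilon>)) \<le> norm (C t) + \<epsilon> * (norm R + e)"
proof -
  define Dv where "Dv = A * C t - C t * A + R"
  define a where "a = norm A"
  define n where "n = norm (C t)"
  define c where "c = (3 * a^2 + a^4) * n"
  have a0: "0 \<le> a" and n0: "0 \<le> n" by (simp_all add: a_def n_def)
  have c0: "0 \<le> c" by (simp add: c_def n_def)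
  from D have "\<forall>e>0. \<exists>d>0. \<forall>y\<in>{0..}. norm (y - t) < d \<longrightarrow> norm (C y - C t - (y - t) *\<^sub>R Dv) \<le> e * norm (y - t)"
    unfolding has_vector_derivative_def has_derivative_within_alt Dv_def by blast
  then obtain d1 where d1: "d1 > 0" and hd1: "\<And>y. y \<in> {0..} \<Longrightarrow> norm (y - t) < d1 \<Longrightarrow> norm (C y - C t - (y - t) *\<^sub>R Dv) \<le> e/2 * norm (y - t)"
    using e by (metis half_gt_zero)
  define d where "d = min d1 (min 1 (e / (2 * (c + 1))))"
  have "d > 0" using d1 e c0 by (simp add: d_def)
  show ?thesis
  proof (intro exI[of _ d] conjI allI impI)
    show "d > 0" by fact
    fix \<epsilon> :: real assume \<epsilon>: "0 < \<epsilon> \<and> \<epsilon> < d"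
    have "\<epsilon> < d1" "\<epsilon> < 1" "\<epsilon> < e / (2*(c+1))" using \<epsilon> by (auto simp: d_def)
    have err: "norm (C (t+\<epsilon>) - C t - \<epsilon> *\<^sub>R Dv) \<le> e/2 * \<epsilon>"
      using hd1[of "t+\<epsilon>"] \<epsilon> t0 \<open>\<epsilon> < d1\<close> by simp
    have key: "norm (C t + \<epsilon> *\<^sub>R (A * C t - C t * A)) \<le> n + \<epsilon>^2 * c"
    proof -
      have id: "C t + \<epsilon> *\<^sub>R (A * C t - C t * A) = (1 + \<epsilon> *\<^sub>R A) * C t * (1 + (-\<epsilon>) *\<^sub>R A) + \<epsilon>^2 *\<^sub>R (A * C t * A)"
        by (simp add: algebra_simps power2_eq_square)
      have n1: "norm (1 + \<epsilon> *\<^sub>R A) \<le> 1 + \<epsilon>^2 * a^2"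
        using norm_one_plus_skew[OF sk, of \<epsilon>] by (simp add: a_def)
      have n2: "norm (1 + (-\<epsilon>) *\<^sub>R A) \<le> 1 + \<epsilon>^2 * a^2"
        using norm_one_plus_skew[OF sk, of "-\<epsilon>"] by (simp add: a_def)
      have "norm ((1 + \<epsilon> *\<^sub>R A) * C t * (1 + (-\<epsilon>) *\<^sub>R A)) \<le> norm ((1 + \<epsilon> *\<^sub>R A) * C t) * norm (1 + (-\<epsilon>) *\<^sub>R A)"
        by (rule norm_mult_ineq)
      also have "\<dots> \<le> (norm (1 + \<epsilon> *\<^sub>R A) * n) * norm (1 + (-\<epsilon>) *\<^sub>R A)"
        unfolding n_def by (intro mult_right_mono norm_mult_ineq norm_ge_zero)
      also have "\<dots> \<le> ((1 + \<epsilon>^2 * a^2) * n) * (1 + \<epsilon>^2 * a^2)"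
        using n1 n2 n0 by (intro mult_mono) simp_all
      finally have m1: "norm ((1 + \<epsilon> *\<^sub>R A) * C t * (1 + (-\<epsilon>) *\<^sub>R A)) \<le> (1 + \<epsilon>^2 * a^2) * n * (1 + \<epsilon>^2 * a^2)" .
      have "norm (A * C t * A) \<le> norm (A * C t) * norm A" by (rule norm_mult_ineq)
      also have "\<dots> \<le> (a * n) * a"
        unfolding a_def n_def by (intro mult_right_mono norm_mult_ineq norm_ge_zero)
      finally have "norm (A * C t * A) \<le> a * n * a" .
      then have m2: "norm (\<epsilon>^2 *\<^sub>R (A * C t * A)) \<le> \<epsilon>^2 * (a * n * a)"
        by (simp add: mult_left_mono)
      have "norm (C t + \<epsilon> *\<^sub>R (A * C t - C t * A)) \<le> (1 + \<epsilon>^2 * a^2) * n * (1 + \<epsilon>^2 * a^2) + \<epsilon>^2 * (a * n * a)"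
        unfolding id using m1 m2 by (meson add_mono norm_triangle_ineq order_trans)
      also have "\<dots> = n + \<epsilon>^2 * ((3 * a^2 + \<epsilon>^2 * a^4) * n)"
        by (simp add: power2_eq_square algebra_simps power4_eq_xxxx)
      also have "\<dots> \<le> n + \<epsilon>^2 * c"
      proof -
        have "\<epsilon>^2 \<le> 1" using \<epsilon> \<open>\<epsilon> < 1\<close> by (simp add: power_le_one)
        then have "\<epsilon>^2 * a^4 \<le> a^4" by (simp add: mult_left_le_one_le)
        then have "(3 * a^2 + \<epsilon>^2 * a^4) * n \<le> c" unfolding c_def using n0 by (intro mult_right_mono) simp_all
        then show ?thesis by (simp add: mult_left_mono)
      qed
      finally show ?thesis .
    qed
    have ec: "\<epsilon>^2 * c \<le> \<epsilon> * (e/2)"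
    proof -
      have "\<epsilon> * (c + 1) < e / 2" using \<open>\<epsilon> < e / (2*(c+1))\<close> c0 by (simp add: field_simps)
      then have "\<epsilon> * c \<le> e/2" using \<epsilon> by (simp add: algebra_simps)
      then show ?thesis using \<epsilon> by (simp add: power2_eq_square mult.assoc mult_left_mono)
    qed
    have "C (t+\<epsilon>) = (C t + \<epsilon> *\<^sub>R (A * C t - C t * A)) + \<epsilon> *\<^sub>R R + (C (t+\<epsilon>) - C t - \<epsilon> *\<^sub>R Dv)"
      by (simp add: Dv_def algebra_simps)
    then have "norm (C (t+\<epsilon>)) \<le> norm (C t + \<epsilon> *\<^sub>R (A * C t - C t * A)) + norm (\<epsilon> *\<^sub>R R) + norm (C (t+\<epsilon>) - C t - \<epsilon> *\<^sub>R Dv)"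
      by (metis norm3)
    also have "\<dots> \<le> (n + \<epsilon>^2 * c) + \<epsilon> * norm R + e/2 * \<epsilon>"
      using key err \<epsilon> by (intro add_mono) simp_all
    also have "\<dots> \<le> norm (C t) + \<epsilon> * (norm R + e)"
      using ec by (simp add: n_def algebra_simps)
    finally show "norm (C (t+\<epsilon>)) \<le> norm (C t) + \<epsilon> * (norm R + e)" .
  qed
qed

lemma dini_mono:
  fixes \<psi> :: "real \<Rightarrow> real"
  assumes cont: "continuous_on {0..T} \<psi>" and T: "0 \<le> T"
    and loc: "\<And>s e. 0 \<le> s \<Longrightarrow> s < T \<Longrightarrow> 0 < e \<Longrightarrow>
       \<exists>d>0. \<forall>\<epsilon>. 0 < \<epsilon> \<and> \<epsilon> < d \<longrightarrow> \<psi> (s + \<epsilon>) \<le> \<psi> s + \<epsilon> * e"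
  shows "\<psi> T \<le> \<psi> 0"
proof (rule field_le_epsilon)
  fix e :: real assume e: "0 < e"
  define e' where "e' = e / (T + 1)"
  have e': "0 < e'" using e T by (simp add: e'_def)
  define P where "P = {s\<in>{0..T}. \<psi> s - e' * s \<le> \<psi> 0}"
  have "closed P"
  proof -
    have "continuous_on {0..T} (\<lambda>s. \<psi> s - e' * s)"
      by (intro continuous_intros cont)
    then have "closed ({0..T} \<inter> (\<lambda>s. \<psi> s - e' * s) -` {..\<psi> 0})"
      by (rule continuous_closed_preimage) auto
    moreover have "{0..T} \<inter> (\<lambda>s. \<psi> s - e' * s) -` {..\<psi> 0} = P"
      by (auto simp: P_def)
    ultimately show ?thesis by simp
  qed
  have "0 \<in> P" using T by (simp add: P_def)
  have bdd: "bdd_above P" by (auto simp: P_def bdd_above_def)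
  define m where "m = Sup P"
  have mP: "m \<in> P" unfolding m_def
    using closed_contains_Sup[OF _ bdd \<open>closed P\<close>] \<open>0 \<in> P\<close> by blast
  have "m = T"
  proof (rule ccontr)
    assume "m \<noteq> T"
    with mP have m: "0 \<le> m" "m < T" by (auto simp: P_def)
    obtain d where d: "d > 0" and hd: "\<And>\<epsilon>. 0 < \<epsilon> \<Longrightarrow> \<epsilon> < d \<Longrightarrow> \<psi> (m + \<epsilon>) \<le> \<psi> m + \<epsilon> * e'"
      using loc[OF m e'] by blast
    obtain q where q: "0 < q" "q \<le> d" "q \<le> T - m"
      using d m by (intro that[of "min d (T - m)"]) auto
    define \<epsilon> where "\<epsilon> = q / 2"
    have \<epsilon>1: "0 < \<epsilon>" using q \<epsilon>_def by linarith
    have \<epsilon>2: "\<epsilon> < d" using q \<epsilon>_def by linarith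
    have \<epsilon>3: "m + \<epsilon> \<le> T" using q \<epsilon>_def by linarith
    note \<epsilon> = \<epsilon>1 \<epsilon>2 \<epsilon>3
    have "\<psi> (m + \<epsilon>) - e' * (m + \<epsilon>) \<le> \<psi> m - e' * m"
      using hd[OF \<epsilon>(1,2)] by (simp add: algebra_simps)
    also have "\<dots> \<le> \<psi> 0" using mP by (simp add: P_def)
    finally have "m + \<epsilon> \<in> P" using \<epsilon> m by (simp add: P_def)
    then have "m + \<epsilon> \<le> m" unfolding m_def using bdd by (rule cSup_upper)
    then show False using \<epsilon> by simp
  qed
  then have "\<psi> T - e' * T \<le> \<psi> 0" using mP by (simp add: P_def)
  moreover have "e' * T \<le> e"
    using e T by (simp add: e'_def field_simps)
  ultimately show "\<psi> T \<le> \<psi> 0 + e" by linarith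
qed

lemma uniform_delta:
  fixes P :: "'i \<Rightarrow> real \<Rightarrow> bool"
  assumes "finite I"
    and "\<And>i. i \<in> I \<Longrightarrow> \<exists>d>0. \<forall>\<epsilon>. 0 < \<epsilon> \<and> \<epsilon> < d \<longrightarrow> P i \<epsilon>"
  shows "\<exists>d>0. \<forall>i\<in>I. \<forall>\<epsilon>. 0 < \<epsilon> \<and> \<epsilon> < d \<longrightarrow> P i \<epsilon>"
  using assms
proof (induction I rule: finite_induct)
  case empty
  show ?case by (rule exI[of _ 1]) simp
next
  case (insert x F)
  then obtain d1 where d1: "d1 > 0" "\<forall>i\<in>F. \<forall>\<epsilon>. 0 < \<epsilon> \<and> \<epsilon> < d1 \<longrightarrow> P i \<epsilon>" by auto
  obtain d2 where d2: "d2 > 0" "\<forall>\<epsilon>. 0 < \<epsilon> \<and> \<epsilon> < d2 \<longrightarrow> P x \<epsilon>" using insert.prems by auto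
  show ?case using d1 d2 by (intro exI[of _ "min d1 d2"]) auto
qed

lemma sum_comm_expand:
  fixes P :: "'j \<Rightarrow> 'a::real_algebra_1"
  shows "(\<Sum>j\<in>T. h j *\<^sub>R P j) * B - B * (\<Sum>j\<in>T. h j *\<^sub>R P j) = (\<Sum>j\<in>T. h j *\<^sub>R (P j * B - B * P j))"
  by (simp add: sum_distrib_left sum_distrib_right sum_subtractf[symmetric] scaleR_right_diff_distrib)

lemma jacobi_sum:
  fixes P :: "'j \<Rightarrow> 'a::real_algebra_1"
  assumes c: "\<And>Y. I * Y = Y * I"
  shows "(I * (\<Sum>j\<in>T. h j *\<^sub>R (P j * X - X * P j))) * B - B * (I * (\<Sum>j\<in>T. h j *\<^sub>R (P j * X - X * P j)))
    = (I * (\<Sum>j\<in>T. h j *\<^sub>R P j)) * (X*B - B*X) - (X*B - B*X) * (I * (\<Sum>j\<in>T. h j *\<^sub>R P j))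
      + - (I * (\<Sum>j\<in>T. h j *\<^sub>R (X * (P j * B - B * P j) - (P j * B - B * P j) * X)))"
proof -
  define Q where "Q j = P j * X - X * P j" for j
  have l: "(I * (\<Sum>j\<in>T. h j *\<^sub>R Q j)) * B - B * (I * (\<Sum>j\<in>T. h j *\<^sub>R Q j))
      = I * ((\<Sum>j\<in>T. h j *\<^sub>R Q j) * B - B * (\<Sum>j\<in>T. h j *\<^sub>R Q j))"
    by (simp add: algebra_simps c[of B] flip: mult.assoc)
  have r: "(I * (\<Sum>j\<in>T. h j *\<^sub>R P j)) * (X*B - B*X) - (X*B - B*X) * (I * (\<Sum>j\<in>T. h j *\<^sub>R P j))
      = I * ((\<Sum>j\<in>T. h j *\<^sub>R P j) * (X*B - B*X) - (X*B - B*X) * (\<Sum>j\<in>T. h j *\<^sub>R P j))"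
    by (simp add: mult.assoc right_diff_distrib) (simp add: c[of "X*B - B*X"] flip: mult.assoc)
  have "(\<Sum>j\<in>T. h j *\<^sub>R Q j) * B - B * (\<Sum>j\<in>T. h j *\<^sub>R Q j)
      = ((\<Sum>j\<in>T. h j *\<^sub>R P j) * (X*B - B*X) - (X*B - B*X) * (\<Sum>j\<in>T. h j *\<^sub>R P j))
        - (\<Sum>j\<in>T. h j *\<^sub>R (X * (P j * B - B * P j) - (P j * B - B * P j) * X))"
    unfolding sum_comm_expand
    by (simp add: sum_subtractf[symmetric] scaleR_right_diff_distrib[symmetric] Q_def algebra_simps)
  then show ?thesis unfolding Q_def[symmetric] l r by (simp add: right_diff_distrib)
qed

lemma Ev_one: "Ev K t 1 = 1"
  by (simp add: Ev_def exp_inv1[of t K, simplified])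

lemma Ev_I0_const: "Ev K t I0 = I0"
  using Ev_I0[of K t 1] by (simp add: Ev_one)

lemma deriv_CC:
  "((\<lambda>t. Ev K t X * B - B * Ev K t X) has_vector_derivative
     (Ev K t (K * X - X * K) * B - B * Ev K t (K * X - X * K))) (at t within S)"
  by (intro has_vector_derivative_diff has_vector_derivative_mult_left has_vector_derivative_mult_right Ev_deriv)

lemma deriv_C:
  fixes \<Gamma> :: "'j::finite \<Rightarrow> 'n::finite cm"
  assumes K: "K = I0 * (\<Sum>j\<in>UNIV. h j *\<^sub>R \<Gamma> j)"
    and T: "\<And>j. j \<notin> T \<Longrightarrow> \<Gamma> j * X = X * \<Gamma> j"
  shows "((\<lambda>t. Ev K t X * B - B * Ev K t X) has_vector_derivative
     ((I0 * (\<Sum>j\<in>T. h j *\<^sub>R Ev K t (\<Gamma> j))) * (Ev K t X * B - B * Ev K t X)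
      - (Ev K t X * B - B * Ev K t X) * (I0 * (\<Sum>j\<in>T. h j *\<^sub>R Ev K t (\<Gamma> j)))
      + - (I0 * (\<Sum>j\<in>T. h j *\<^sub>R (Ev K t X * (Ev K t (\<Gamma> j) * B - B * Ev K t (\<Gamma> j))
            - (Ev K t (\<Gamma> j) * B - B * Ev K t (\<Gamma> j)) * Ev K t X))))) (at t within S)"
proof -
  have "K * X - X * K = I0 * (\<Sum>j\<in>UNIV. h j *\<^sub>R (\<Gamma> j * X - X * \<Gamma> j))"
  proof -
    have "K * X - X * K = I0 * ((\<Sum>j\<in>UNIV. h j *\<^sub>R \<Gamma> j) * X - X * (\<Sum>j\<in>UNIV. h j *\<^sub>R \<Gamma> j))"
      unfolding K by (simp add: right_diff_distrib mult.assoc) (simp add: I0_central[of X] flip: mult.assoc)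
    then show ?thesis by (simp only: sum_comm_expand)
  qed
  also have "(\<Sum>j\<in>UNIV. h j *\<^sub>R (\<Gamma> j * X - X * \<Gamma> j)) = (\<Sum>j\<in>T. h j *\<^sub>R (\<Gamma> j * X - X * \<Gamma> j))"
    by (rule sum.mono_neutral_right) (auto simp: T)
  finally have kx: "K * X - X * K = I0 * (\<Sum>j\<in>T. h j *\<^sub>R (\<Gamma> j * X - X * \<Gamma> j))" .
  have ev: "Ev K t (K * X - X * K) = I0 * (\<Sum>j\<in>T. h j *\<^sub>R (Ev K t (\<Gamma> j) * Ev K t X - Ev K t X * Ev K t (\<Gamma> j)))"
    unfolding kx by (simp add: Ev_I0_const Ev_sum Ev_scaleR Ev_diff Ev_mult)
  show ?thesis
    using deriv_CC[of K X B t S] unfolding ev jacobi_sum[OF I0_central] .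
qed

lemma norm_commutator: "norm (X * Y - Y * X) \<le> 2 * norm X * norm (Y::'a::real_normed_algebra)"
proof -
  have "norm (X * Y - Y * X) \<le> norm (X * Y) + norm (Y * X)" by (rule norm_triangle_ineq4)
  also have "\<dots> \<le> norm X * norm Y + norm Y * norm X" by (intro add_mono norm_mult_ineq)
  finally show ?thesis by simp
qed

lemma bound_C:
  fixes \<Gamma> :: "'j::finite \<Rightarrow> 'n::finite cm"
  assumes K: "K = I0 * (\<Sum>j\<in>UNIV. h j *\<^sub>R \<Gamma> j)" and skK: "skew K"
    and skI: "\<And>j. skew (I0 * \<Gamma> j)"
    and T: "\<And>j. j \<notin> T \<Longrightarrow> \<Gamma> j * X = X * \<Gamma> j"
    and t0: "0 \<le> t" and e: "0 < e"
  shows "\<exists>d>0. \<forall>\<epsilon>. 0 < \<epsilon> \<and> \<epsilon> < d \<longrightarrow> norm (Ev K (t+\<epsilon>) X * B - B * Ev K (t+\<epsilon>) X)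
     \<le> norm (Ev K t X * B - B * Ev K t X) + \<epsilon> * ((\<Sum>j\<in>T. \<bar>h j\<bar> * (2 * norm X * norm (Ev K t (\<Gamma> j) * B - B * Ev K t (\<Gamma> j)))) + e)"
proof -
  define A where "A = I0 * (\<Sum>j\<in>T. h j *\<^sub>R Ev K t (\<Gamma> j))"
  define Cj where "Cj j = Ev K t (\<Gamma> j) * B - B * Ev K t (\<Gamma> j)" for j
  define R where "R = - (I0 * (\<Sum>j\<in>T. h j *\<^sub>R (Ev K t X * Cj j - Cj j * Ev K t X)))"
  define C where "C s = Ev K s X * B - B * Ev K s X" for s
  have D: "(C has_vector_derivative (A * C t - C t * A + R)) (at t within {0..})"
    unfolding C_def[abs_def] A_def R_def Cj_def by (rule deriv_C[OF K T])
  have "A = (\<Sum>j\<in>T. h j *\<^sub>R Ev K t (I0 * \<Gamma> j))"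
    unfolding A_def by (simp add: sum_distrib_left Ev_I0)
  then have skA: "skew A"
    by (simp add: skew_sum skew_scaleR skew_Ev[OF skK skI])
  have nR: "norm R \<le> (\<Sum>j\<in>T. \<bar>h j\<bar> * (2 * norm X * norm (Cj j)))"
  proof -
    have "norm R \<le> norm (\<Sum>j\<in>T. h j *\<^sub>R (Ev K t X * Cj j - Cj j * Ev K t X))"
      unfolding R_def norm_minus_cancel by (rule norm_I0_mult)
    also have "\<dots> \<le> (\<Sum>j\<in>T. norm (h j *\<^sub>R (Ev K t X * Cj j - Cj j * Ev K t X)))"
      by (rule norm_sum)
    also have "\<dots> \<le> (\<Sum>j\<in>T. \<bar>h j\<bar> * (2 * norm X * norm (Cj j)))"
    proof (rule sum_mono)
      fix j
      have "norm (Ev K t X * Cj j - Cj j * Ev K t X) \<le> 2 * norm X * norm (Cj j)"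
        using norm_commutator[of "Ev K t X" "Cj j"] norm_Ev[OF skK] by simp
      then show "norm (h j *\<^sub>R (Ev K t X * Cj j - Cj j * Ev K t X)) \<le> \<bar>h j\<bar> * (2 * norm X * norm (Cj j))"
        by (simp add: mult_left_mono)
    qed
    finally show ?thesis .
  qed
  obtain d where d: "d > 0" and hd: "\<forall>\<epsilon>. 0 < \<epsilon> \<and> \<epsilon> < d \<longrightarrow> norm (C (t+\<epsilon>)) \<le> norm (C t) + \<epsilon> * (norm R + e)"
    using local_bound[OF D skA t0 e] by blast
  show ?thesis
  proof (intro exI[of _ d] conjI allI impI)
    show "d > 0" by fact
    fix \<epsilon> :: real assume \<epsilon>: "0 < \<epsilon> \<and> \<epsilon> < d"
    have "norm (C (t+\<epsilon>)) \<le> norm (C t) + \<epsilon> * (norm R + e)" using hd \<epsilon> by blast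
    also have "\<dots> \<le> norm (C t) + \<epsilon> * ((\<Sum>j\<in>T. \<bar>h j\<bar> * (2 * norm X * norm (Cj j))) + e)"
      using nR \<epsilon> by (simp add: mult_left_mono)
    finally show "norm (Ev K (t+\<epsilon>) X * B - B * Ev K (t+\<epsilon>) X)
     \<le> norm (Ev K t X * B - B * Ev K t X) + \<epsilon> * ((\<Sum>j\<in>T. \<bar>h j\<bar> * (2 * norm X * norm (Ev K t (\<Gamma> j) * B - B * Ev K t (\<Gamma> j)))) + e)"
      by (simp add: C_def Cj_def)
  qed
qed

lemma integral_local_lower:
  fixes r :: "real \<Rightarrow> real"
  assumes cont: "continuous_on {0..} r" and s: "0 \<le> s" and e: "0 < e"
  shows "\<exists>d>0. \<forall>\<epsilon>. 0 < \<epsilon> \<and> \<epsilon> < d \<longrightarrow> integral {0..s+\<epsilon>} r - integral {0..s} r \<ge> \<epsilon> * (r s - e)"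
proof -
  from cont s e obtain d where d: "d > 0" and hd: "\<And>u. u \<in> {0..} \<Longrightarrow> dist u s < d \<Longrightarrow> dist (r u) (r s) < e"
    unfolding continuous_on_iff by (metis atLeast_iff)
  show ?thesis
  proof (intro exI[of _ d] conjI allI impI)
    show "d > 0" by fact
    fix \<epsilon> :: real assume \<epsilon>: "0 < \<epsilon> \<and> \<epsilon> < d"
    have int: "r integrable_on {0..s+\<epsilon>}"
      by (rule integrable_continuous_interval) (rule continuous_on_subset[OF cont], auto)
    have int2: "r integrable_on {s..s+\<epsilon>}"
      by (rule integrable_continuous_interval) (rule continuous_on_subset[OF cont], use s in auto)
    have "integral {0..s} r + integral {s..s+\<epsilon>} r = integral {0..s+\<epsilon>} r"
      by (rule Henstock_Kurzweil_Integration.integral_combine) (use s \<epsilon> int in auto)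
    moreover have "integral {s..s+\<epsilon>} (\<lambda>_. r s - e) \<le> integral {s..s+\<epsilon>} r"
    proof (rule integral_le)
      show "(\<lambda>_. r s - e) integrable_on {s..s+\<epsilon>}" by (rule integrable_const_ivl)
      show "r integrable_on {s..s+\<epsilon>}" by (rule int2)
      fix u assume "u \<in> {s..s+\<epsilon>}"
      then have "dist (r u) (r s) < e" using s \<epsilon> by (intro hd) (auto simp: dist_real_def)
      then show "r s - e \<le> r u" by (simp add: dist_real_def)
    qed
    moreover have "integral {s..s+\<epsilon>} (\<lambda>_. r s - e) = \<epsilon> * (r s - e)"
      using \<epsilon> by simp
    ultimately show "integral {0..s+\<epsilon>} r - integral {0..s} r \<ge> \<epsilon> * (r s - e)" by linarith
  qed
qed

lemma deriv_lower:
  fixes f :: "real \<Rightarrow> real"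
  assumes "(f has_real_derivative D) (at s within {0..})" "0 \<le> s" "0 < e"
  shows "\<exists>d>0. \<forall>\<epsilon>. 0 < \<epsilon> \<and> \<epsilon> < d \<longrightarrow> f (s+\<epsilon>) \<ge> f s + \<epsilon> * (D - e)"
proof -
  from assms(1) have "\<forall>e>0. \<exists>d>0. \<forall>y\<in>{0..}. norm (y - s) < d \<longrightarrow> norm (f y - f s - (y - s) * D) \<le> e * norm (y - s)"
    unfolding has_field_derivative_def has_derivative_within_alt by (simp add: mult.commute)
  then obtain d where d: "d > 0" and hd: "\<And>y. y \<in> {0..} \<Longrightarrow> norm (y - s) < d \<Longrightarrow> norm (f y - f s - (y - s) * D) \<le> e * norm (y - s)"
    using assms(3) by blast
  show ?thesis
  proof (intro exI[of _ d] conjI allI impI)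
    show "d > 0" by fact
    fix \<epsilon> :: real assume \<epsilon>: "0 < \<epsilon> \<and> \<epsilon> < d"
    have "\<bar>f (s+\<epsilon>) - f s - \<epsilon> * D\<bar> \<le> e * \<epsilon>" using hd[of "s+\<epsilon>"] \<epsilon> assms(2) by simp
    then show "f (s+\<epsilon>) \<ge> f s + \<epsilon> * (D - e)" by (simp add: algebra_simps abs_le_iff)
  qed
qed

lemma uniform_delta':
  fixes P :: "'i \<Rightarrow> real \<Rightarrow> bool"
  assumes "finite I" "\<forall>i\<in>I. \<exists>d>0. \<forall>\<epsilon>. 0 < \<epsilon> \<and> \<epsilon> < d \<longrightarrow> P i \<epsilon>"
  shows "\<exists>d>0. \<forall>i\<in>I. \<forall>\<epsilon>. 0 < \<epsilon> \<and> \<epsilon> < d \<longrightarrow> P i \<epsilon>"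
  using uniform_delta[OF assms(1)] assms(2) by blast

lemma cont_C: "continuous_on S (\<lambda>t. Ev K t X * B - B * Ev K t X)"
  by (rule continuous_on_vector_derivative) (rule deriv_CC)

lemma part1:
  fixes \<Gamma> :: "'j::finite \<Rightarrow> 'n::finite cm" and h :: "'j \<Rightarrow> real" and g :: "real \<Rightarrow> 'j \<Rightarrow> real"
    and N :: "'j \<Rightarrow> 'j set"
  assumes K: "K = I0 * (\<Sum>j\<in>UNIV. h j *\<^sub>R \<Gamma> j)" and skK: "skew K" and skI: "\<And>j. skew (I0 * \<Gamma> j)"
    and nG: "\<And>j. norm (\<Gamma> j) = 1"
    and Ncomm: "\<And>i j. j \<notin> N i \<Longrightarrow> \<Gamma> j * \<Gamma> i = \<Gamma> i * \<Gamma> j"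
    and ode: "\<And>i t. t \<ge> 0 \<Longrightarrow> ((\<lambda>s. g s i) has_real_derivative (2 * (\<Sum>j\<in>N i. \<bar>h j\<bar> * g t j))) (at t within {0..})"
    and init: "\<And>i. g 0 i = norm (\<Gamma> i * B - B * \<Gamma> i)"
  shows "\<forall>t\<ge>0. \<forall>i. norm (Ev K t (\<Gamma> i) * B - B * Ev K t (\<Gamma> i)) \<le> g t i"
proof (intro allI impI)
  fix T :: real and i0 :: 'j
  assume T: "0 \<le> T"
  define x where "x i t = norm (Ev K t (\<Gamma> i) * B - B * Ev K t (\<Gamma> i))" for i t
  define w where "w i t = x i t - g t i" for i t
  define V where "V t = (\<Sum>i\<in>UNIV. max 0 (w i t))" for t
  define Mc where "Mc = 2 * (\<Sum>j\<in>UNIV. \<bar>h j\<bar>)"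
  define Nc where "Nc = real CARD('j)"
  define L where "L = Nc * Mc"
  define \<psi> where "\<psi> t = exp (- L * t) * V t" for t
  have Nc1: "Nc \<ge> 1" by (simp add: Nc_def Suc_le_eq)
  have Mc0: "Mc \<ge> 0" by (simp add: Mc_def sum_nonneg)
  have L0: "L \<ge> 0" using Nc1 Mc0 by (simp add: L_def)
  have V0: "V t \<ge> 0" for t by (simp add: V_def sum_nonneg)
  have wV: "w j t \<le> V t" for j t
  proof -
    have "w j t \<le> max 0 (w j t)" by simp
    also have "\<dots> \<le> V t" unfolding V_def by (rule member_le_sum) auto
    finally show ?thesis .
  qed
  have contg: "continuous_on {0..} (\<lambda>t. g t i)" for i
  proof -
    have "continuous (at t within {0..}) (\<lambda>t. g t i)" if "t \<in> {0..}" for t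
      using ode[of t i] that
      by (intro has_vector_derivative_continuous) (auto simp: has_real_derivative_iff_has_vector_derivative)
    then show ?thesis by (simp add: continuous_on_eq_continuous_within)
  qed
  have contx: "continuous_on S (\<lambda>t. x i t)" for i S
    unfolding x_def by (intro continuous_on_norm cont_C)
  have contpsi: "continuous_on {0..T} \<psi>"
  proof -
    have "continuous_on {0..T} (\<lambda>t. g t i)" for i by (rule continuous_on_subset[OF contg]) auto
    then show ?thesis unfolding \<psi>_def V_def w_def
      by (intro continuous_intros contx) auto
  qed
  have loc: "\<exists>d>0. \<forall>\<epsilon>. 0 < \<epsilon> \<and> \<epsilon> < d \<longrightarrow> \<psi> (s + \<epsilon>) \<le> \<psi> s + \<epsilon> * e"
    if s: "0 \<le> s" and e: "0 < e" for s e
  proof -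
    define e1 where "e1 = e / (2 * Nc)"
    have e1: "0 < e1" using e Nc1 by (simp add: e1_def)
    have "\<forall>i\<in>UNIV. \<exists>d>0. \<forall>\<epsilon>. 0 < \<epsilon> \<and> \<epsilon> < d \<longrightarrow>
        (x i (s+\<epsilon>) \<le> x i s + \<epsilon> * ((\<Sum>j\<in>N i. \<bar>h j\<bar> * (2 * norm (\<Gamma> i) * x j s)) + e1) \<and>
         g (s+\<epsilon>) i \<ge> g s i + \<epsilon> * (2 * (\<Sum>j\<in>N i. \<bar>h j\<bar> * g s j) - e1))"
    proof
      fix i :: 'j
      obtain d1 where d1: "d1 > 0" and h1: "\<forall>\<epsilon>. 0 < \<epsilon> \<and> \<epsilon> < d1 \<longrightarrow> x i (s+\<epsilon>) \<le> x i s + \<epsilon> * ((\<Sum>j\<in>N i. \<bar>h j\<bar> * (2 * norm (\<Gamma> i) * x j s)) + e1)"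
        using bound_C[OF K skK skI Ncomm[of _ i] s e1, where B=B] unfolding x_def by blast
      obtain d2 where d2: "d2 > 0" and h2: "\<forall>\<epsilon>. 0 < \<epsilon> \<and> \<epsilon> < d2 \<longrightarrow> g (s+\<epsilon>) i \<ge> g s i + \<epsilon> * (2 * (\<Sum>j\<in>N i. \<bar>h j\<bar> * g s j) - e1)"
        using deriv_lower[OF ode[OF s] s e1] by blast
      show "\<exists>d>0. \<forall>\<epsilon>. 0 < \<epsilon> \<and> \<epsilon> < d \<longrightarrow>
        (x i (s+\<epsilon>) \<le> x i s + \<epsilon> * ((\<Sum>j\<in>N i. \<bar>h j\<bar> * (2 * norm (\<Gamma> i) * x j s)) + e1) \<and>
         g (s+\<epsilon>) i \<ge> g s i + \<epsilon> * (2 * (\<Sum>j\<in>N i. \<bar>h j\<bar> * g s j) - e1))"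
        using d1 d2 h1 h2 by (intro exI[of _ "min d1 d2"]) auto
    qed
    from uniform_delta'[OF finite_class.finite_UNIV this] obtain d where d: "d > 0" and hd0: "\<forall>i\<in>UNIV. \<forall>\<epsilon>. 0 < \<epsilon> \<and> \<epsilon> < d \<longrightarrow>
        (x i (s+\<epsilon>) \<le> x i s + \<epsilon> * ((\<Sum>j\<in>N i. \<bar>h j\<bar> * (2 * norm (\<Gamma> i) * x j s)) + e1) \<and>
         g (s+\<epsilon>) i \<ge> g s i + \<epsilon> * (2 * (\<Sum>j\<in>N i. \<bar>h j\<bar> * g s j) - e1))"
      by blast
    note hd = hd0[rule_format, OF UNIV_I]
    show ?thesis
    proof (intro exI[of _ d] conjI allI impI)
      show "d > 0" by fact
      fix \<epsilon> :: real assume \<epsilon>: "0 < \<epsilon> \<and> \<epsilon> < d"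
      have wstep: "w i (s+\<epsilon>) \<le> w i s + \<epsilon> * (Mc * V s + 2 * e1)" for i
      proof -
        have hx: "x i (s+\<epsilon>) \<le> x i s + \<epsilon> * ((\<Sum>j\<in>N i. \<bar>h j\<bar> * (2 * x j s)) + e1)"
          using hd[of \<epsilon> i] \<epsilon> nG by simp
        have hg: "g (s+\<epsilon>) i \<ge> g s i + \<epsilon> * (2 * (\<Sum>j\<in>N i. \<bar>h j\<bar> * g s j) - e1)"
          using hd[of \<epsilon> i] \<epsilon> by simp
        have "(\<Sum>j\<in>N i. \<bar>h j\<bar> * (2 * x j s)) - 2 * (\<Sum>j\<in>N i. \<bar>h j\<bar> * g s j) = (\<Sum>j\<in>N i. 2 * \<bar>h j\<bar> * w j s)"
          by (simp add: w_def sum_distrib_left sum_subtractf[symmetric] algebra_simps)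
        also have "\<dots> \<le> (\<Sum>j\<in>N i. 2 * \<bar>h j\<bar> * V s)"
          by (intro sum_mono mult_left_mono wV) simp
        also have "\<dots> \<le> (\<Sum>j\<in>UNIV. 2 * \<bar>h j\<bar> * V s)"
          by (intro sum_mono2) (auto simp: V0)
        also have "\<dots> = Mc * V s" by (simp add: Mc_def sum_distrib_left sum_distrib_right mult_ac)
        finally have S: "(\<Sum>j\<in>N i. \<bar>h j\<bar> * (2 * x j s)) - 2 * (\<Sum>j\<in>N i. \<bar>h j\<bar> * g s j) \<le> Mc * V s" .
        have "w i (s+\<epsilon>) \<le> w i s + \<epsilon> * (((\<Sum>j\<in>N i. \<bar>h j\<bar> * (2 * x j s)) - 2 * (\<Sum>j\<in>N i. \<bar>h j\<bar> * g s j)) + 2 * e1)"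
          using hx hg by (simp add: w_def algebra_simps)
        also have "\<dots> \<le> w i s + \<epsilon> * (Mc * V s + 2 * e1)"
          using S \<epsilon> by (intro add_left_mono mult_left_mono) simp_all
        finally show ?thesis .
      qed
      have pos: "0 \<le> \<epsilon> * (Mc * V s + 2 * e1)" using \<epsilon> Mc0 V0[of s] e1 by simp
      have "V (s+\<epsilon>) \<le> (\<Sum>i\<in>UNIV. max 0 (w i s) + \<epsilon> * (Mc * V s + 2 * e1))"
        unfolding V_def[of "s+\<epsilon>"]
      proof (rule sum_mono)
        fix i
        show "max 0 (w i (s+\<epsilon>)) \<le> max 0 (w i s) + \<epsilon> * (Mc * V s + 2 * e1)"
          using wstep[of i] pos by linarith
      qed
      also have "\<dots> = V s + Nc * (\<epsilon> * (Mc * V s + 2 * e1))"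
        by (simp add: V_def sum.distrib Nc_def)
      also have "\<dots> = V s + \<epsilon> * (L * V s + e)"
        using Nc1 by (simp add: L_def e1_def algebra_simps)
      finally have Vstep: "V (s+\<epsilon>) \<le> V s * (1 + \<epsilon> * L) + \<epsilon> * e"
        by (simp add: algebra_simps)
      define a where "a = exp (- L * s)"
      define b where "b = exp (- L * \<epsilon>)"
      have a: "0 < a" "a \<le> 1" using L0 s by (auto simp: a_def)
      have b: "0 < b" "b \<le> 1" using L0 \<epsilon> by (auto simp: b_def)
      have b1: "b * (1 + \<epsilon> * L) \<le> 1"
      proof -
        have "1 + \<epsilon> * L \<le> exp (\<epsilon> * L)" by (rule exp_ge_add_one_self)
        then have "b * (1 + \<epsilon> * L) \<le> b * exp (\<epsilon> * L)" using b by (intro mult_left_mono) simp_all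
        also have "\<dots> = 1" by (simp add: b_def exp_minus_inverse[symmetric] mult.commute exp_add[symmetric])
        finally show ?thesis .
      qed
      have "\<psi> (s+\<epsilon>) = a * b * V (s+\<epsilon>)"
        by (simp add: \<psi>_def a_def b_def exp_add[symmetric] algebra_simps)
      also have "\<dots> \<le> a * b * (V s * (1 + \<epsilon> * L) + \<epsilon> * e)"
        using a b Vstep by (intro mult_left_mono) simp_all
      also have "\<dots> = a * (b * (1 + \<epsilon> * L)) * V s + (a * b) * (\<epsilon> * e)"
        by (simp add: algebra_simps)
      also have "\<dots> \<le> a * 1 * V s + 1 * (\<epsilon> * e)"
      proof (intro add_mono mult_right_mono mult_left_mono)
        show "a * b \<le> 1" using a b by (simp add: mult_le_one)
      qed (use a b b1 V0[of s] \<epsilon> e in simp_all)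
      also have "\<dots> = \<psi> s + \<epsilon> * e" by (simp add: \<psi>_def a_def)
      finally show "\<psi> (s + \<epsilon>) \<le> \<psi> s + \<epsilon> * e" .
    qed
  qed
  have "\<psi> T \<le> \<psi> 0"
    by (rule dini_mono[OF contpsi T]) (rule loc, simp_all)
  moreover have "\<psi> 0 = 0"
    by (simp add: \<psi>_def V_def w_def x_def Ev_0 init)
  ultimately have "exp (- L * T) * V T \<le> 0" by (simp add: \<psi>_def)
  then have "V T \<le> 0" by (simp add: mult_le_0_iff)
  then have "V T = 0" using V0[of T] by simp
  then have "max 0 (w i0 T) = 0"
    unfolding V_def by (subst (asm) sum_nonneg_eq_0_iff) auto
  then show "norm (Ev K T (\<Gamma> i0) * B - B * Ev K T (\<Gamma> i0)) \<le> g T i0"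
    by (simp add: w_def x_def)
qed

lemma part2:
  fixes \<Gamma> :: "'j::finite \<Rightarrow> 'n::finite cm" and h :: "'j \<Rightarrow> real" and g :: "real \<Rightarrow> 'j \<Rightarrow> real"
  assumes K: "K = I0 * (\<Sum>j\<in>UNIV. h j *\<^sub>R \<Gamma> j)" and skK: "skew K" and skI: "\<And>j. skew (I0 * \<Gamma> j)"
    and P1: "\<And>t i. t \<ge> 0 \<Longrightarrow> norm (Ev K t (\<Gamma> i) * B - B * Ev K t (\<Gamma> i)) \<le> g t i"
    and contg: "\<And>i. continuous_on {0..} (\<lambda>t. g t i)"
    and T: "\<And>j. j \<notin> S \<Longrightarrow> \<Gamma> j * X = X * \<Gamma> j"
    and t: "0 \<le> t"
  shows "norm (Ev K t X * B - B * Ev K t X) - norm (X * B - B * X)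
    \<le> integral {0..t} (\<lambda>s. \<Sum>i\<in>S. 2 * norm X * \<bar>h i\<bar> * g s i)"
proof -
  define r where "r s = (\<Sum>i\<in>S. 2 * norm X * \<bar>h i\<bar> * g s i)" for s
  define \<phi> where "\<phi> s = norm (Ev K s X * B - B * Ev K s X)" for s
  define \<Phi> where "\<Phi> s = integral {0..s} r" for s
  define \<psi> where "\<psi> s = \<phi> s - \<Phi> s" for s
  have contr: "continuous_on {0..} r"
    unfolding r_def by (intro continuous_intros contg)
  have "continuous_on {0..t} \<Phi>"
    unfolding \<Phi>_def
    by (rule indefinite_integral_continuous_1, rule integrable_continuous_interval,
        rule continuous_on_subset[OF contr]) auto
  moreover have "continuous_on {0..t} \<phi>"
    unfolding \<phi>_def by (intro continuous_on_norm cont_C)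
  ultimately have contpsi: "continuous_on {0..t} \<psi>"
    unfolding \<psi>_def by (intro continuous_intros)
  have loc: "\<exists>d>0. \<forall>\<epsilon>. 0 < \<epsilon> \<and> \<epsilon> < d \<longrightarrow> \<psi> (s + \<epsilon>) \<le> \<psi> s + \<epsilon> * e"
    if s: "0 \<le> s" and e: "0 < e" for s e
  proof -
    have e2: "0 < e/2" using e by simp
    obtain d1 where d1: "d1 > 0" and h1: "\<forall>\<epsilon>. 0 < \<epsilon> \<and> \<epsilon> < d1 \<longrightarrow> \<phi> (s+\<epsilon>) \<le> \<phi> s +
        \<epsilon> * ((\<Sum>j\<in>S. \<bar>h j\<bar> * (2 * norm X * norm (Ev K s (\<Gamma> j) * B - B * Ev K s (\<Gamma> j)))) + e/2)"
      using bound_C[OF K skK skI T s e2, where B=B] unfolding \<phi>_def by blast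
    obtain d2 where d2: "d2 > 0" and h2: "\<forall>\<epsilon>. 0 < \<epsilon> \<and> \<epsilon> < d2 \<longrightarrow> \<Phi> (s+\<epsilon>) - \<Phi> s \<ge> \<epsilon> * (r s - e/2)"
      using integral_local_lower[OF contr s e2] unfolding \<Phi>_def by blast
    have sb: "(\<Sum>j\<in>S. \<bar>h j\<bar> * (2 * norm X * norm (Ev K s (\<Gamma> j) * B - B * Ev K s (\<Gamma> j)))) \<le> r s"
      unfolding r_def
    proof (rule sum_mono)
      fix j
      have "\<bar>h j\<bar> * (2 * norm X * norm (Ev K s (\<Gamma> j) * B - B * Ev K s (\<Gamma> j))) \<le> \<bar>h j\<bar> * (2 * norm X * g s j)"
        using P1[OF s, of j] by (intro mult_left_mono) simp_all
      then show "\<bar>h j\<bar> * (2 * norm X * norm (Ev K s (\<Gamma> j) * B - B * Ev K s (\<Gamma> j))) \<le> 2 * norm X * \<bar>h j\<bar> * g s j"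
        by (simp add: mult_ac)
    qed
    show ?thesis
    proof (intro exI[of _ "min d1 d2"] conjI allI impI)
      show "0 < min d1 d2" using d1 d2 by simp
      fix \<epsilon> :: real assume \<epsilon>: "0 < \<epsilon> \<and> \<epsilon> < min d1 d2"
      have a: "\<phi> (s+\<epsilon>) \<le> \<phi> s + \<epsilon> * ((\<Sum>j\<in>S. \<bar>h j\<bar> * (2 * norm X * norm (Ev K s (\<Gamma> j) * B - B * Ev K s (\<Gamma> j)))) + e/2)"
        using h1 \<epsilon> by simp
      also have "\<dots> \<le> \<phi> s + \<epsilon> * (r s + e/2)"
        using sb \<epsilon> by (intro add_left_mono mult_left_mono) simp_all
      finally have a': "\<phi> (s+\<epsilon>) \<le> \<phi> s + \<epsilon> * (r s + e/2)" .
      have b: "\<Phi> (s+\<epsilon>) - \<Phi> s \<ge> \<epsilon> * (r s - e/2)" using h2 \<epsilon> by simp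
      show "\<psi> (s + \<epsilon>) \<le> \<psi> s + \<epsilon> * e"
        using a' b unfolding \<psi>_def by (simp add: algebra_simps)
    qed
  qed
  have "\<psi> t \<le> \<psi> 0"
    by (rule dini_mono[OF contpsi t]) (rule loc, simp_all)
  moreover have "\<psi> 0 = norm (X * B - B * X)"
    by (simp add: \<psi>_def \<phi>_def \<Phi>_def Ev_0)
  moreover have "r = (\<lambda>s. \<Sum>i\<in>S. 2 * norm X * \<bar>h i\<bar> * g s i)" by (simp add: r_def fun_eq_iff)
  ultimately show ?thesis by (simp add: \<psi>_def \<phi>_def \<Phi>_def)
qed

lemma cont_from_deriv:
  fixes f :: "real \<Rightarrow> real"
  assumes "\<And>t. t \<ge> 0 \<Longrightarrow> (f has_real_derivative D t) (at t within {0..})"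
  shows "continuous_on {0..} f"
proof -
  have "continuous (at t within {0..}) f" if "t \<in> {0..}" for t
    using assms[of t] that
    by (intro has_vector_derivative_continuous) (auto simp: has_real_derivative_iff_has_vector_derivative)
  then show ?thesis by (simp add: continuous_on_eq_continuous_within)
qed

theorem mainTheorem1:
  fixes h :: "'j::finite \<Rightarrow> real"
    and \<gamma> :: "'j \<Rightarrow> complex^'n^'n"
    and H B :: "complex^'n^'n"
    and g :: "real \<Rightarrow> 'j \<Rightarrow> real"
  assumes H_def: "H = (\<Sum>j\<in>UNIV. h j *\<^sub>R \<gamma> j)"
    and herm: "\<And>j. adjoint (\<gamma> j) = \<gamma> j"
    and unit_norm: "\<And>j. opnorm (\<gamma> j) = 1"
    and ode: "\<And>i t. t \<ge> 0 \<Longrightarrow>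
       ((\<lambda>s. g s i) has_real_derivative
          (2 * (\<Sum>j\<in>{j. cedge \<gamma> i j}. \<bar>h j\<bar> * g t j))) (at t within {0..})"
    and init: "\<And>i. g 0 i = opnorm (comm (\<gamma> i) B)"
  shows "(\<forall>t\<ge>0. \<forall>i. opnorm (comm (evol H t (\<gamma> i)) B) \<le> g t i)
    \<and> (\<forall>A t. t \<ge> 0 \<longrightarrow>
         opnorm (comm (evol H t A) B) - opnorm (comm A B)
           \<le> integral {0..t} (\<lambda>s. \<Sum>i\<in>supp_cg \<gamma> A. 2 * opnorm A * \<bar>h i\<bar> * g s i))"
  proof -
  define \<Gamma> where "\<Gamma> j = (cm_of (\<gamma> j) :: 'n cm)" for j
  define Bm where "Bm = (cm_of B :: 'n cm)"
  define K where "K = (Km H :: 'n cm)"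
  have Kd: "K = I0 * (\<Sum>j\<in>UNIV. h j *\<^sub>R \<Gamma> j)"
    unfolding K_def Km_def cm_of_cscale H_def by (simp add: cm_of_sum cm_of_scaleR \<Gamma>_def)
  have skI: "skew (I0 * \<Gamma> j)" for j
    using hermitian_skew[OF herm[of j]] by (simp add: cm_of_cscale \<Gamma>_def)
  have skK: "skew K"
    unfolding Kd by (simp add: sum_distrib_left skew_sum skew_scaleR skI)
  have nG: "norm (\<Gamma> j) = 1" for j by (simp add: \<Gamma>_def norm_cm.rep_eq cm_of_inverse unit_norm)
  have conv: "opnorm (comm (evol H t M) B) = norm (Ev K t (cm_of M) * Bm - Bm * Ev K t (cm_of M))" for t M
  proof -
    have "comm (evol H t M) B = mat_of (Ev K t (cm_of M) * Bm - Bm * Ev K t (cm_of M))"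
      by (simp add: comm_def evol_Ev K_def Bm_def mat_of_diff mat_of_mult cm_of_inverse)
    then show ?thesis by (simp add: norm_cm.rep_eq)
  qed
  have conv0: "opnorm (comm M B) = norm (cm_of M * Bm - Bm * cm_of M)" for M
  proof -
    have "comm M B = mat_of (cm_of M * Bm - Bm * cm_of M)"
      by (simp add: comm_def Bm_def mat_of_diff mat_of_mult cm_of_inverse)
    then show ?thesis by (simp add: norm_cm.rep_eq)
  qed
  have Ncomm: "\<Gamma> j * \<Gamma> i = \<Gamma> i * \<Gamma> j" if "j \<notin> {j. cedge \<gamma> i j}" for i j
  proof (cases "i = j")
    case False
    with that have "comm (\<gamma> i) (\<gamma> j) = 0" by (simp add: cedge_def)
    then have "\<gamma> i ** \<gamma> j = \<gamma> j ** \<gamma> i" by (simp add: comm_def)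
    then show ?thesis by (simp add: \<Gamma>_def cm_of_mult[symmetric])
  qed simp
  have P1: "\<forall>t\<ge>0. \<forall>i. norm (Ev K t (\<Gamma> i) * Bm - Bm * Ev K t (\<Gamma> i)) \<le> g t i"
    by (rule part1[OF Kd skK skI nG Ncomm ode]) (simp_all add: init conv0 \<Gamma>_def)
  have contg: "continuous_on {0..} (\<lambda>t. g t i)" for i
    by (rule cont_from_deriv[OF ode])
  show ?thesis
  proof (intro conjI allI impI)
    fix t :: real and i assume "0 \<le> t"
    then show "opnorm (comm (evol H t (\<gamma> i)) B) \<le> g t i"
      using P1 by (simp add: conv \<Gamma>_def)
  next
    fix A :: "complex^'n^'n" and t :: real assume t: "0 \<le> t"
    have T: "\<Gamma> j * cm_of A = cm_of A * \<Gamma> j" if "j \<notin> supp_cg \<gamma> A" for j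
    proof -
      from that have "comm (\<gamma> j) A = 0" by (simp add: supp_cg_def)
      then have "\<gamma> j ** A = A ** \<gamma> j" by (simp add: comm_def)
      then show ?thesis by (simp add: \<Gamma>_def cm_of_mult[symmetric])
    qed
    have "norm (Ev K t (cm_of A) * Bm - Bm * Ev K t (cm_of A)) - norm (cm_of A * Bm - Bm * cm_of A)
      \<le> integral {0..t} (\<lambda>s. \<Sum>i\<in>supp_cg \<gamma> A. 2 * norm (cm_of A :: 'n cm) * \<bar>h i\<bar> * g s i)"
      by (rule part2[OF Kd skK skI _ contg T t]) (use P1 in blast)
    moreover have "norm (cm_of A :: 'n cm) = opnorm A" by (simp add: norm_cm.rep_eq cm_of_inverse)
    ultimately show "opnorm (comm (evol H t A) B) - opnorm (comm A B)
           \<le> integral {0..t} (\<lambda>s. \<Sum>i\<in>supp_cg \<gamma> A. 2 * opnorm A * \<bar>h i\<bar> * g s i)"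
      unfolding conv[of t A] conv0[of A] by simp
  qed
qed


end
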